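(* Let $(R,+,\cdot)$ be a finite simple additively idempotent semiring with $|R|>2$ such that $(R,+)$ has a neutral element $0_R$, and let $(M,+)$ be a finite idempotent sub-irreducible $R$-semimodule. Then $(M,+)$ has a neutral element.
   Context: A semiring is a nonempty set with a commutative semigroup operation $+$ and a semigroup operation $\cdot$ satisfying both distributive laws; simple if its only congruences are the identity and the full relation; additively idempotent if $r+r=r$. An $R$-semimodule is a commutative semigroup $(M,+)$ with an action $R\times M\to M$ satisfying $r(sx)=(rs)x$, $(r+s)x=rx+sx$, $r(x+y)=rx+ry$; idempotent if $x+x=x$. A subsemimodule is a subsemigroup closed under the action. $M$ is quasitrivial if $rx=sx$ for all $r,s,x$; id-quasitrivial if $rx=x$ for all $r,x$; sub-irreducible if not quasitrivial and all proper subsemimodules are id-quasitrivial. *)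

theory Defs
  imports Main
begin

definition semiring :: "('r \<Rightarrow> 'r \<Rightarrow> 'r) \<Rightarrow> ('r \<Rightarrow> 'r \<Rightarrow> 'r) \<Rightarrow> bool" where
  "semiring add mul \<longleftrightarrow>
     (\<forall>a b c. add (add a b) c = add a (add b c)) \<and>
     (\<forall>a b. add a b = add b a) \<and>
     (\<forall>a b c. mul (mul a b) c = mul a (mul b c)) \<and>
     (\<forall>a b c. mul a (add b c) = add (mul a b) (mul a c)) \<and>
     (\<forall>a b c. mul (add a b) c = add (mul a c) (mul b c))"

definition semiring_congruence ::
  "('r \<Rightarrow> 'r \<Rightarrow> 'r) \<Rightarrow> ('r \<Rightarrow> 'r \<Rightarrow> 'r) \<Rightarrow> ('r \<times> 'r) set \<Rightarrow> bool" where
  "semiring_congruence add mul \<rho> \<longleftrightarrow>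
     equiv UNIV \<rho> \<and>
     (\<forall>a b c d. (a, b) \<in> \<rho> \<and> (c, d) \<in> \<rho> \<longrightarrow>
        (add a c, add b d) \<in> \<rho> \<and> (mul a c, mul b d) \<in> \<rho>)"

definition simple_semiring :: "('r \<Rightarrow> 'r \<Rightarrow> 'r) \<Rightarrow> ('r \<Rightarrow> 'r \<Rightarrow> 'r) \<Rightarrow> bool" where
  "simple_semiring add mul \<longleftrightarrow> semiring add mul \<and>
     (\<forall>\<rho>. semiring_congruence add mul \<rho> \<longrightarrow> \<rho> = Id \<or> \<rho> = UNIV)"

definition add_idempotent :: "('a \<Rightarrow> 'a \<Rightarrow> 'a) \<Rightarrow> bool" where
  "add_idempotent add \<longleftrightarrow> (\<forall>x. add x x = x)"

definition semimodule ::
  "('r \<Rightarrow> 'r \<Rightarrow> 'r) \<Rightarrow> ('r \<Rightarrow> 'r \<Rightarrow> 'r) \<Rightarrow> ('m \<Rightarrow> 'm \<Rightarrow> 'm) \<Rightarrow> ('r \<Rightarrow> 'm \<Rightarrow> 'm) \<Rightarrow> bool" where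
  "semimodule add mul madd act \<longleftrightarrow>
     (\<forall>x y z. madd (madd x y) z = madd x (madd y z)) \<and>
     (\<forall>x y. madd x y = madd y x) \<and>
     (\<forall>r s x. act r (act s x) = act (mul r s) x) \<and>
     (\<forall>r s x. act (add r s) x = madd (act r x) (act s x)) \<and>
     (\<forall>r x y. act r (madd x y) = madd (act r x) (act r y))"

definition subsemimodule :: "('m \<Rightarrow> 'm \<Rightarrow> 'm) \<Rightarrow> ('r \<Rightarrow> 'm \<Rightarrow> 'm) \<Rightarrow> 'm set \<Rightarrow> bool" where
  "subsemimodule madd act N \<longleftrightarrow> N \<noteq> {} \<and>
     (\<forall>x\<in>N. \<forall>y\<in>N. madd x y \<in> N) \<and> (\<forall>r. \<forall>x\<in>N. act r x \<in> N)"

definition quasitrivial :: "('r \<Rightarrow> 'm \<Rightarrow> 'm) \<Rightarrow> bool" where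
  "quasitrivial act \<longleftrightarrow> (\<forall>r s x. act r x = act s x)"

definition id_quasitrivial_on :: "('r \<Rightarrow> 'm \<Rightarrow> 'm) \<Rightarrow> 'm set \<Rightarrow> bool" where
  "id_quasitrivial_on act N \<longleftrightarrow> (\<forall>r. \<forall>x\<in>N. act r x = x)"

definition sub_irreducible :: "('m \<Rightarrow> 'm \<Rightarrow> 'm) \<Rightarrow> ('r \<Rightarrow> 'm \<Rightarrow> 'm) \<Rightarrow> bool" where
  "sub_irreducible madd act \<longleftrightarrow> \<not> quasitrivial act \<and>
     (\<forall>N. subsemimodule madd act N \<and> N \<noteq> UNIV \<longrightarrow> id_quasitrivial_on act N)"

definition has_neutral :: "('a \<Rightarrow> 'a \<Rightarrow> 'a) \<Rightarrow> bool" where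
  "has_neutral add \<longleftrightarrow> (\<exists>z. \<forall>x. add z x = x)"

end

theory Submission
  imports Defs
begin

theorem proposition2p23:
  fixes add mul :: "'r \<Rightarrow> 'r \<Rightarrow> 'r"
    and madd :: "'m \<Rightarrow> 'm \<Rightarrow> 'm"
    and act :: "'r \<Rightarrow> 'm \<Rightarrow> 'm"
  assumes "finite (UNIV :: 'r set)"
    and "simple_semiring add mul"
    and "add_idempotent add"
    and "card (UNIV :: 'r set) > 2"
    and "has_neutral add"
    and "finite (UNIV :: 'm set)"
    and "semimodule add mul madd act"
    and "add_idempotent madd"
    and "sub_irreducible madd act"
  shows "has_neutral madd"
proof -
  from assms(5) obtain z where z: "\<And>r. add z r = r" unfolding has_neutral_def by blast
  have simple: "\<And>\<rho>. semiring_congruence add mul \<rho> \<Longrightarrow> \<rho> = Id \<or> \<rho> = UNIV"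
    using assms(2) unfolding simple_semiring_def by blast
  have acomm: "\<And>a b. add a b = add b a" and aassoc: "\<And>a b c. add (add a b) c = add a (add b c)"
    using assms(2) unfolding simple_semiring_def semiring_def by blast+
  have aidem: "\<And>r. add r r = r" using assms(3) unfolding add_idempotent_def by blast
  have midem: "\<And>x. madd x x = x" using assms(8) unfolding add_idempotent_def by blast
  have massoc: "\<And>x y w. madd (madd x y) w = madd x (madd y w)"
    and mcomm: "\<And>x y. madd x y = madd y x"
    and act_mul: "\<And>r s x. act r (act s x) = act (mul r s) x"
    and act_add: "\<And>r s x. act (add r s) x = madd (act r x) (act s x)"
    and act_madd: "\<And>r x y. act r (madd x y) = madd (act r x) (act r y)"
    using assms(7) unfolding semimodule_def by blast+
  have nqt: "\<not> quasitrivial act" and subirr: "\<And>N. subsemimodule madd act N \<Longrightarrow> N \<noteq> UNIV \<Longrightarrow> id_quasitrivial_on act N"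
    using assms(9) unfolding sub_irreducible_def by blast+
  have le_trans: "madd a c = c" if "madd a b = b" "madd b c = c" for a b c
    by (metis massoc that)
  have le_join: "madd a (madd x y) = madd x y" if "madd a x = x" for a x y
    by (metis massoc that)
  have le_antisym: "a = b" if "madd a b = b" "madd b a = a" for a b
    by (metis mcomm that)
  have act_mono: "madd (act r x) (act r y) = act r y" if "madd x y = y" for r x y
    by (metis act_madd that)
  have f_le: "madd (act z x) (act r x) = act r x" for r x
    by (metis act_add z)
  have faithful: "r = s" if "\<And>x. act r x = act s x" for r s
  proof -
    let ?rho = "{(r,s). \<forall>x. act r x = act s x}"
    have "semiring_congruence add mul ?rho"
      unfolding semiring_congruence_def equiv_def refl_on_def sym_def trans_def
      by (auto simp: act_add act_mul[symmetric])
    then have "?rho = Id \<or> ?rho = UNIV" by (rule simple)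
    moreover have "?rho \<noteq> UNIV" using nqt unfolding quasitrivial_def by auto
    ultimately have "?rho = Id" by blast
    then show ?thesis using that by auto
  qed
  have notriv: "\<not> (\<forall>r s. mul r s = s)"
  proof
    assume triv: "\<forall>r s. mul r s = s"
    let ?rho = "{(x,y). (x = z) = (y = z)}"
    have zsum: "add a c = z \<longleftrightarrow> a = z \<and> c = z" for a c
    proof
      assume h: "add a c = z"
      have "add a z = z" by (metis h aassoc aidem)
      then have a: "a = z" by (metis z acomm)
      then show "a = z \<and> c = z" using h z by simp
    qed (simp add: z)
    have "semiring_congruence add mul ?rho"
      unfolding semiring_congruence_def equiv_def refl_on_def sym_def trans_def
      using zsum triv by auto
    then have "?rho = Id \<or> ?rho = UNIV" by (rule simple)
    moreover
    {
      assume "?rho = UNIV"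
      then have "\<forall>y. y = z" by (metis (mono_tags, lifting) UNIV_I case_prodD mem_Collect_eq)
      then have "(UNIV :: 'r set) = {z}" by auto
      then have False using assms(4) by (metis card.empty card_insert_disjoint empty_iff finite.emptyI One_nat_def less_not_sym less_numeral_extra(4) one_less_numeral_iff semiring_norm(76) \<open>UNIV = {z}\<close>)
    }
    moreover
    {
      assume h: "?rho = Id"
      have "card (UNIV :: 'r set) > 2" by (rule assms(4))
      have "\<exists>y. y \<noteq> z"
      proof (rule ccontr)
        assume "\<not> (\<exists>y. y \<noteq> z)"
        then have "(UNIV :: 'r set) = {z}" by auto
        then show False using assms(4) by (metis card.empty card_insert_disjoint empty_iff finite.emptyI One_nat_def less_not_sym less_numeral_extra(4) one_less_numeral_iff semiring_norm(76) \<open>UNIV = {z}\<close>)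
      qed
      then obtain y where y: "y \<noteq> z" by blast
      have "\<forall>w. w = z \<or> w = y"
      proof
        fix w
        show "w = z \<or> w = y"
        proof (cases "w = z")
          case False
          then have "(w,y) \<in> ?rho" using y by auto
          then show ?thesis using h by auto
        qed simp
      qed
      then have "(UNIV :: 'r set) \<subseteq> {z, y}" by auto
      then have "card (UNIV :: 'r set) \<le> 2"
      proof -
        have "card (UNIV :: 'r set) \<le> card {z, y}" using \<open>UNIV \<subseteq> {z, y}\<close> by (intro card_mono) auto
        also have "\<dots> \<le> 2" by (simp add: card_insert_if)
        finally show ?thesis .
      qed
      then have False using assms(4) by simp
    }
    ultimately show False by blast
  qed
  have minex: "\<exists>m. madd m x = x \<and> (\<forall>y. madd y m = m \<longrightarrow> y = m)" for x
  proof -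
    have "\<forall>x. card {y. madd y x = x} = n \<longrightarrow> (\<exists>m. madd m x = x \<and> (\<forall>y. madd y m = m \<longrightarrow> y = m))" for n
    proof (induction n rule: less_induct)
      case (less n)
      show ?case
      proof (intro allI impI)
        fix x assume cx: "card {y. madd y x = x} = n"
        show "\<exists>m. madd m x = x \<and> (\<forall>y. madd y m = m \<longrightarrow> y = m)"
        proof (cases "\<forall>y. madd y x = x \<longrightarrow> y = x")
          case True then show ?thesis using midem by blast
        next
          case False
          then obtain y where y1: "madd y x = x" and y2: "y \<noteq> x" by blast
          have sub: "{w. madd w y = y} \<subset> {w. madd w x = x}"
          proof
            show "{w. madd w y = y} \<subseteq> {w. madd w x = x}" using le_trans y1 by blast
            have "x \<notin> {w. madd w y = y}" using le_antisym y1 y2 by blast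
            moreover have "x \<in> {w. madd w x = x}" using midem by simp
            ultimately show "{w. madd w y = y} \<noteq> {w. madd w x = x}" by blast
          qed
          have "card {w. madd w y = y} < n" using cx sub assms(6)
            by (metis psubset_card_mono rev_finite_subset subset_UNIV)
          then obtain m where "madd m y = y" "\<forall>w. madd w m = m \<longrightarrow> w = m"
            using less by blast
          then show ?thesis using le_trans y1 by blast
        qed
      qed
    qed
    then show ?thesis by blast
  qed
  have Ssub: "subsemimodule madd act {x. madd m x = x \<or> madd (act z m) x = x}" for m
    unfolding subsemimodule_def
  proof (intro conjI ballI allI)
    show "{x. madd m x = x \<or> madd (act z m) x = x} \<noteq> {}" using midem by blast
  next
    fix x y assume "x \<in> {x. madd m x = x \<or> madd (act z m) x = x}"
    then show "madd x y \<in> {x. madd m x = x \<or> madd (act z m) x = x}" using le_join by blast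
  next
    fix r x assume "x \<in> {x. madd m x = x \<or> madd (act z m) x = x}"
    then consider "madd m x = x" | "madd (act z m) x = x" by blast
    then show "act r x \<in> {x. madd m x = x \<or> madd (act z m) x = x}"
    proof cases
      case 1
      then have "madd (act r m) (act r x) = act r x" by (rule act_mono)
      then have "madd (act z m) (act r x) = act r x" using f_le le_trans by blast
      then show ?thesis by blast
    next
      case 2
      then have "madd (act r (act z m)) (act r x) = act r x" by (rule act_mono)
      then have "madd (act z m) (act r x) = act r x" using f_le le_trans act_mul by metis
      then show ?thesis by blast
    qed
  qed
  have Usub: "subsemimodule madd act {x. madd m x = x}" if "\<And>r. act r m = m" for m
    unfolding subsemimodule_def
  proof (intro conjI ballI allI)
    show "{x. madd m x = x} \<noteq> {}" using midem by blast
  next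
    fix x y assume "x \<in> {x. madd m x = x}"
    then show "madd x y \<in> {x. madd m x = x}" using le_join by blast
  next
    fix r x assume "x \<in> {x. madd m x = x}"
    then have "madd (act r m) (act r x) = act r x" using act_mono by blast
    then show "act r x \<in> {x. madd m x = x}" using that by simp
  qed
  show ?thesis
  proof (rule ccontr)
    assume nb: "\<not> has_neutral madd"
    then have nbot: "\<exists>x. madd b x \<noteq> x" for b unfolding has_neutral_def by blast
    have "\<exists>m r. (\<forall>y. madd y m = m \<longrightarrow> y = m) \<and> madd m (act r m) \<noteq> act r m"
    proof (rule ccontr)
      assume H: "\<not> (\<exists>m r. (\<forall>y. madd y m = m \<longrightarrow> y = m) \<and> madd m (act r m) \<noteq> act r m)"
      have "act r x = x" for r x
      proof -
        obtain m where m1: "madd m x = x" and m2: "\<forall>y. madd y m = m \<longrightarrow> y = m" using minex by blast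
        have up: "madd m (act r m) = act r m" for r using H m2 by blast
        have "subsemimodule madd act {x. madd m x = x}"
          unfolding subsemimodule_def
        proof (intro conjI ballI allI)
          show "{x. madd m x = x} \<noteq> {}" using midem by blast
        next
          fix x y assume "x \<in> {x. madd m x = x}"
          then show "madd x y \<in> {x. madd m x = x}" using le_join by blast
        next
          fix r x assume "x \<in> {x. madd m x = x}"
          then have "madd (act r m) (act r x) = act r x" using act_mono by blast
          then have "madd m (act r x) = act r x" using up le_trans by blast
          then show "act r x \<in> {x. madd m x = x}" by simp
        qed
        moreover have "{x. madd m x = x} \<noteq> UNIV" using nbot by blast
        ultimately have "id_quasitrivial_on act {x. madd m x = x}" by (rule subirr)
        then show ?thesis using m1 unfolding id_quasitrivial_on_def by blast
      qed
      then have "quasitrivial act" unfolding quasitrivial_def by simp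
      then show False using nqt by blast
    qed
    then obtain m r0 where mmin: "\<forall>y. madd y m = m \<longrightarrow> y = m" and r0: "madd m (act r0 m) \<noteq> act r0 m"
      by blast
    define S where "S = {x. madd m x = x \<or> madd (act z m) x = x}"
    have SU: "S = UNIV"
    proof (rule ccontr)
      assume "S \<noteq> UNIV"
      then have "id_quasitrivial_on act S" using Ssub subirr unfolding S_def by blast
      moreover have "m \<in> S" unfolding S_def using midem by blast
      ultimately have "act r0 m = m" unfolding id_quasitrivial_on_def by blast
      then show False using r0 midem by simp
    qed
    obtain x where x: "madd m x \<noteq> x" using nbot by blast
    obtain m2 where m21: "madd m2 x = x" and m22: "\<forall>y. madd y m2 = m2 \<longrightarrow> y = m2" using minex by blast
    have "m2 \<in> S" using SU by simp
    moreover have "madd m m2 \<noteq> m2" using le_trans m21 x by blast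
    ultimately have "madd (act z m) m2 = m2" unfolding S_def by blast
    then have m2eq: "act z m = m2" using m22 by blast
    define m' where "m' = act z m"
    have m'min: "\<forall>y. madd y m' = m' \<longrightarrow> y = m'" using m22 m2eq m'_def by simp
    have nmm': "madd m m' \<noteq> m'" using \<open>madd m m2 \<noteq> m2\<close> m2eq m'_def by simp
    have nm'm: "madd m' m \<noteq> m"
    proof
      assume "madd m' m = m"
      then have "m' = m" using mmin by blast
      then show False using nmm' midem by simp
    qed
    define S' where "S' = {x. madd m' x = x \<or> madd (act z m') x = x}"
    show False
    proof (cases "S' = UNIV")
      case True
      then have "m \<in> S'" by simp
      then have "madd (act z m') m = m" using nm'm unfolding S'_def by blast
      then have mz: "act z m' = m" using mmin by blast
      have "act (mul z z) m = m" using mz act_mul m'_def by metis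
      moreover have "madd (act z m) (act (mul z z) m) = act (mul z z) m" by (rule f_le)
      ultimately show False using nm'm m'_def by simp
    next
      case False
      then have "id_quasitrivial_on act S'" using Ssub subirr unfolding S'_def by blast
      moreover have "m' \<in> S'" unfolding S'_def using midem by blast
      ultimately have fix': "act r m' = m'" for r unfolding id_quasitrivial_on_def by blast
      have "{x. madd m' x = x} \<noteq> UNIV" using nm'm by blast
      then have idU: "id_quasitrivial_on act {x. madd m' x = x}" using Usub[OF fix'] subirr by blast
      have "act (mul r s) x = act s x" for r s x
      proof -
        have "x \<in> S" using SU by simp
        then consider "madd m x = x" | "madd m' x = x" unfolding S_def m'_def by blast
        then show ?thesis
        proof cases
          case 1
          then have "madd (act s m) (act s x) = act s x" by (rule act_mono)
          then have "madd m' (act s x) = act s x" using f_le le_trans m'_def by blast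
          then have "act r (act s x) = act s x" using idU unfolding id_quasitrivial_on_def by blast
          then show ?thesis using act_mul by metis
        next
          case 2
          then have xin: "x \<in> {x. madd m' x = x}" by simp
          have "act s x = x" "act r x = x"
            using idU xin unfolding id_quasitrivial_on_def by blast+
          then have "act r (act s x) = act s x" by simp
          then show ?thesis using act_mul by metis
        qed
      qed
      then have "mul r s = s" for r s using faithful by blast
      then show False using notriv by blast
    qed
  qed
qed

end
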